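(* Let $(\Omega,\mathcal{F},\mathbf{P})$ be a probability space and $\theta\colon\Omega\to\Omega$ an ergodic automorphism of it. Let $A$ be an $N\times N$ matrix with nonnegative entries $a_{ij}$, and let $D\colon\Omega\to\mathbb{R}^{N\times N}$ be a measurable matrix function such that (A1) for each $\omega\in\Omega$, $D(\omega)=\mathrm{diag}(d_1(\omega),\dots,d_N(\omega))$ with $d_i(\omega)>0$ for $1\le i\le N$; (A2) $\ln^{+}\bigl(\max_{1\le i\le N} d_i(\cdot)\bigr)\in L_1(\Omega,\mathcal{F},\mathbf{P})$. Let $\lambda\in[-\infty,\infty)$ be the top Lyapunov exponent of the random matrix system $\{A D(\omega)\}_{\omega\in\Omega}$, and let $\bar{D}=\mathrm{diag}(\bar d_1,\dots,\bar d_N)$ where $\ln \bar d_i=\int_\Omega \ln d_i\,d\mathbf{P}$ (with the conventions $\ln 0=-\infty$, $e^{-\infty}=0$, so $\bar d_i\in[0,\infty)$). Then $\lambda\ge \ln r(A\bar D)$, where $r(A\bar D)$ is the spectral radius of $A\bar D$.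
   Context: An automorphism $\theta$ of $(\Omega,\mathcal{F},\mathbf{P})$ is ergodic if every $\Omega'\in\mathcal{F}$ with $\theta(\Omega')=\Omega'$ has $\mathbf{P}(\Omega')\in\{0,1\}$. For a measurable $S\colon\Omega\to\mathbb{R}^{N\times N}$ put $S^{(n)}(\omega)=S(\theta^{n-1}\omega)\cdots S(\theta\omega)S(\omega)$. When $\ln^+\|S(\cdot)\|\in L_1$, there is $\lambda\in[-\infty,\infty)$ with $\lambda=\lim_{n\to\infty}\frac1n\ln\|S^{(n)}(\omega)\|$ for a.e. $\omega$ (Furstenberg–Kesten); this $\lambda$ is called the top Lyapunov exponent of the system $\{S(\omega)\}$. Here $S(\omega)=AD(\omega)$, $\|\cdot\|$ is the Euclidean (operator) norm, and $\ln 0=-\infty$. *)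

theory Defs
  imports "HOL-Probability.Probability"
begin

definition eln :: "real \<Rightarrow> ereal" where
  "eln x = (if x = 0 then -\<infinity> else ereal (ln x))"

definition eexp :: "ereal \<Rightarrow> real" where
  "eexp x = (if x = -\<infinity> then 0 else exp (real_of_ereal x))"

text \<open>Extended integral of a real function: positive part minus negative part
  (well defined whenever the positive part has finite integral).\<close>
definition ext_integral :: "'a measure \<Rightarrow> ('a \<Rightarrow> real) \<Rightarrow> ereal" where
  "ext_integral M f =
     enn2ereal (\<integral>\<^sup>+ x. ennreal (max 0 (f x)) \<partial>M) - enn2ereal (\<integral>\<^sup>+ x. ennreal (max 0 (- f x)) \<partial>M)"

definition automorphism :: "'a measure \<Rightarrow> ('a \<Rightarrow> 'a) \<Rightarrow> bool" where
  "automorphism M \<theta> \<longleftrightarrow>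
     bij_betw \<theta> (space M) (space M) \<and>
     \<theta> \<in> M \<rightarrow>\<^sub>M M \<and>
     the_inv_into (space M) \<theta> \<in> M \<rightarrow>\<^sub>M M \<and>
     (\<forall>B \<in> sets M. emeasure M (\<theta> -` B \<inter> space M) = emeasure M B)"

definition ergodic_automorphism :: "'a measure \<Rightarrow> ('a \<Rightarrow> 'a) \<Rightarrow> bool" where
  "ergodic_automorphism M \<theta> \<longleftrightarrow>
     automorphism M \<theta> \<and>
     (\<forall>B \<in> sets M. \<theta> ` B = B \<longrightarrow> measure M B = 0 \<or> measure M B = 1)"

fun cocycle :: "('a \<Rightarrow> 'a) \<Rightarrow> ('a \<Rightarrow> real^'n^'n) \<Rightarrow> nat \<Rightarrow> 'a \<Rightarrow> real^'n^'n" where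
  "cocycle \<theta> S 0 w = mat 1"
| "cocycle \<theta> S (Suc n) w = S ((\<theta> ^^ n) w) ** cocycle \<theta> S n w"

definition opnorm :: "real^'n^'n \<Rightarrow> real" where
  "opnorm B = onorm (\<lambda>x. B *v x)"

definition cmat :: "real^'n^'n \<Rightarrow> complex^'n^'n" where
  "cmat B = (\<chi> i j. complex_of_real (B $ i $ j))"

definition cspectrum :: "real^'n^'n \<Rightarrow> complex set" where
  "cspectrum B = {z. \<exists>v::complex^'n. v \<noteq> 0 \<and> cmat B *v v = z *s v}"

definition spectral_radius :: "real^'n^'n \<Rightarrow> real" where
  "spectral_radius B = Max (cmod ` cspectrum B)"

end

theory Submission
  imports Defs "Jordan_Normal_Form.Spectral_Radius"
begin


hide_const (open) Spectral_Radius.spectral_radius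
no_notation Matrix.vec_index (infixl "$" 100)

lemma cspectrum_finite_nonempty:
  fixes B :: "real^'n^'n"
  shows "finite (cspectrum B) \<and> cspectrum B \<noteq> {}"
proof -
  define N where "N = CARD('n)"
  obtain f :: "nat \<Rightarrow> 'n" where bf: "bij_betw f {0..<N} UNIV"
    using ex_bij_betw_nat_finite[of "UNIV::'n set"] unfolding N_def by auto
  define g where "g = inv_into {0..<N} f"
  have gf: "\<And>i. i < N \<Longrightarrow> g (f i) = i" unfolding g_def using bf
    by (simp add: bij_betw_def inv_into_f_f)
  have fg: "\<And>x. f (g x) = x" unfolding g_def using bf
    by (meson UNIV_I bij_betw_inv_into_right)
  have gN: "\<And>x. g x < N" unfolding g_def using bf
    by (metis UNIV_I atLeastLessThan_iff bij_betw_def inv_into_into)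
  have sumr: "\<And>h::'n \<Rightarrow> complex. (\<Sum>k\<in>UNIV. h k) = (\<Sum>i\<in>{0..<N}. h (f i))"
    using sum.reindex_bij_betw[OF bf] by metis
  define JM where "JM = Matrix.mat N N (\<lambda>(i,j). cmat B $ f i $ f j)"
  have JMc: "JM \<in> carrier_mat N N" unfolding JM_def by simp
  have Npos: "N > 0" unfolding N_def by simp
  have mulJ: "vec_index (JM *\<^sub>v w) i = (cmat B *v (\<chi> x. vec_index w (g x))) $ f i"
    if "dim_vec w = N" "i < N" for w i
  proof -
    have "vec_index (JM *\<^sub>v w) i = (\<Sum>j\<in>{0..<N}. cmat B $ f i $ f j * vec_index w j)"
      using that by (simp add: JM_def scalar_prod_def)
    also have "\<dots> = (\<Sum>j\<in>{0..<N}. cmat B $ f i $ f j * (\<chi> x. vec_index w (g x)) $ f j)"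
      by (rule sum.cong, auto simp: gf)
    also have "\<dots> = (cmat B *v (\<chi> x. vec_index w (g x))) $ f i"
      by (simp add: matrix_vector_mult_def sumr)
    finally show ?thesis .
  qed
  have eq: "cspectrum B = Spectral_Radius.spectrum JM"
  proof (rule Set.set_eqI, rule iffI)
    fix z assume "z \<in> cspectrum B"
    then obtain v where v0: "v \<noteq> 0" and ev: "cmat B *v v = z *s v" unfolding cspectrum_def by auto
    define w where "w = Matrix.vec N (\<lambda>i. v $ f i)"
    have vw: "(\<chi> x. vec_index w (g x)) = v" unfolding w_def by (simp add: gN fg)
    obtain x where "v $ x \<noteq> 0" using v0 by (metis Finite_Cartesian_Product.vec_eq_iff Finite_Cartesian_Product.zero_index)
    hence w0: "w \<noteq> 0\<^sub>v N" unfolding w_def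
      by (metis fg gN index_vec index_zero_vec(1))
    have dw: "dim_vec w = N" unfolding w_def by simp
    have "vec_index (JM *\<^sub>v w) i = vec_index (z \<cdot>\<^sub>v w) i" if "i < N" for i
    proof -
      have "vec_index (JM *\<^sub>v w) i = (cmat B *v v) $ f i" using mulJ[OF dw that] vw by simp
      also have "\<dots> = z * v $ f i" using ev by simp
      finally show ?thesis using that dw by (simp add: w_def)
    qed
    hence "JM *\<^sub>v w = z \<cdot>\<^sub>v w"
      by (intro eq_vecI, auto simp: dw JM_def)
    then show "z \<in> Spectral_Radius.spectrum JM"
      unfolding Spectral_Radius.spectrum_def eigenvalue_def eigenvector_def using w0
      by (intro CollectI exI[of _ w] conjI) (auto simp: JM_def w_def)
  next
    fix z assume "z \<in> Spectral_Radius.spectrum JM"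
    then obtain w where wc: "w \<in> carrier_vec N" and w0: "w \<noteq> 0\<^sub>v N" and ev: "JM *\<^sub>v w = z \<cdot>\<^sub>v w"
      unfolding Spectral_Radius.spectrum_def eigenvalue_def eigenvector_def by (auto simp: JM_def)
    define v where "v = (\<chi> x. vec_index w (g x))"
    obtain i where i: "i < N" "vec_index w i \<noteq> 0" using w0 wc
      by (metis carrier_vecD eq_vecI index_zero_vec(1) index_zero_vec(2))
    have "v $ f i \<noteq> 0" using i by (simp add: v_def gf)
    hence v0: "v \<noteq> 0" by auto
    have "cmat B *v v = z *s v"
    proof (rule Finite_Cartesian_Product.vec_eq_iff[THEN iffD2], rule allI)
      fix x
      have "(cmat B *v v) $ x = (cmat B *v v) $ f (g x)" by (simp add: fg)
      also have "\<dots> = vec_index (JM *\<^sub>v w) (g x)" using mulJ[of w "g x"] wc gN by (simp add: v_def)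
      also have "\<dots> = z * vec_index w (g x)" using ev wc gN by simp
      finally show "(cmat B *v v) $ x = (z *s v) $ x" by (simp add: v_def)
    qed
    then show "z \<in> cspectrum B" using v0 unfolding cspectrum_def by auto
  qed
  show ?thesis unfolding eq using card_finite_spectrum(1)[OF JMc] spectrum_non_empty[OF JMc Npos] by auto
qed

hide_const (open) Matrix.mat Matrix.vec Matrix.row Matrix.col



lemma ln_sum_ge:
  fixes q y :: "'i \<Rightarrow> real"
  assumes "finite K" "K \<noteq> {}" "sum q K = 1" "\<And>k. k \<in> K \<Longrightarrow> q k \<ge> 0" "\<And>k. k \<in> K \<Longrightarrow> y k > 0"
  shows "(\<Sum>k\<in>K. q k * ln (y k)) \<le> ln (\<Sum>k\<in>K. q k * y k)"
proof -
  have cv: "convex_on {0<..} (\<lambda>x. - ln x)"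
    using ln_concave by (simp add: concave_on_def)
  have "- ln (\<Sum>k\<in>K. q k *\<^sub>R y k) \<le> (\<Sum>k\<in>K. q k * - ln (y k))"
    by (rule convex_on_sum[OF assms(1,2) cv assms(3,4)]) (use assms(5) in auto)
  then show ?thesis by (simp add: sum_negf)
qed

fun mpow :: "real^'n^'n \<Rightarrow> nat \<Rightarrow> real^'n^'n" where
  "mpow B 0 = mat 1"
| "mpow B (Suc n) = B ** mpow B n"

lemma automorphism_distr:
  assumes "automorphism M \<theta>"
  shows "distr M M \<theta> = M"
proof (rule measure_eqI)
  show "sets (distr M M \<theta>) = sets M" by simp
  fix B assume "B \<in> sets (distr M M \<theta>)"
  then show "emeasure (distr M M \<theta>) B = emeasure M B"
    using assms unfolding automorphism_def by (simp add: emeasure_distr)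
qed

lemma funpow_measurable:
  assumes "\<theta> \<in> M \<rightarrow>\<^sub>M M" shows "(\<theta> ^^ n) \<in> M \<rightarrow>\<^sub>M M"
  by (induction n) (auto intro: measurable_compose[OF _ assms])

lemma funpow_distr:
  assumes "automorphism M \<theta>"
  shows "distr M M (\<theta> ^^ n) = M"
proof (induction n)
  case 0
  then show ?case by (simp add: distr_id2 id_def)
next
  case (Suc n)
  have th: "\<theta> \<in> M \<rightarrow>\<^sub>M M" using assms unfolding automorphism_def by auto
  have "distr M M (\<theta> ^^ Suc n) = distr M M (\<theta> \<circ> \<theta> ^^ n)" by simp
  also have "\<dots> = distr (distr M M (\<theta> ^^ n)) M \<theta>"
    by (rule distr_distr[symmetric, OF th funpow_measurable[OF th]])
  also have "\<dots> = M" using Suc automorphism_distr[OF assms] by simp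
  finally show ?case .
qed

lemma funpow_integral:
  fixes f :: "'a \<Rightarrow> real"
  assumes "automorphism M \<theta>" "integrable M f"
  shows "integrable M (\<lambda>x. f ((\<theta> ^^ n) x))" "(\<integral>x. f ((\<theta> ^^ n) x) \<partial>M) = integral\<^sup>L M f"
proof -
  have th: "\<theta> \<in> M \<rightarrow>\<^sub>M M" using assms unfolding automorphism_def by auto
  have fm: "f \<in> borel_measurable M" using assms by auto
  show "integrable M (\<lambda>x. f ((\<theta> ^^ n) x))"
    using integrable_distr_eq[OF funpow_measurable[OF th] fm] funpow_distr[OF assms(1)] assms(2) by simp
  show "(\<integral>x. f ((\<theta> ^^ n) x) \<partial>M) = integral\<^sup>L M f"
    using integral_distr[OF funpow_measurable[OF th] fm] funpow_distr[OF assms(1)] by simp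
qed

lemma funpow_space:
  assumes "automorphism M \<theta>" "w \<in> space M" shows "(\<theta> ^^ n) w \<in> space M"
proof -
  have th: "\<theta> \<in> M \<rightarrow>\<^sub>M M" using assms unfolding automorphism_def by auto
  show ?thesis using measurable_space[OF funpow_measurable[OF th] assms(2)] .
qed

lemma ennreal_max0: "ennreal (max 0 x) = ennreal x"
  by (simp add: max_def ennreal_neg)

lemma eexp_ext_integral:
  assumes fm: "f \<in> borel_measurable M" and pos: "(\<integral>\<^sup>+ x. ennreal (f x) \<partial>M) \<noteq> \<infinity>"
  shows "eexp (ext_integral M f) \<ge> 0"
    "eexp (ext_integral M f) > 0 \<Longrightarrow> integrable M f \<and> eexp (ext_integral M f) = exp (integral\<^sup>L M f)"
proof -
  define a where "a = (\<integral>\<^sup>+ x. ennreal (f x) \<partial>M)"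
  define b where "b = (\<integral>\<^sup>+ x. ennreal (- f x) \<partial>M)"
  have ext: "ext_integral M f = enn2ereal a - enn2ereal b"
    unfolding ext_integral_def a_def b_def by (simp only: ennreal_max0)
  show "eexp (ext_integral M f) \<ge> 0" unfolding eexp_def by simp
  assume gt: "eexp (ext_integral M f) > 0"
  have "b \<noteq> \<infinity>"
  proof
    assume "b = \<infinity>"
    then have "ext_integral M f = -\<infinity>" using pos unfolding ext a_def[symmetric]
      by (cases a) auto
    then show False using gt unfolding eexp_def by simp
  qed
  then have int: "integrable M f" using fm pos unfolding real_integrable_def a_def b_def by auto
  have "ext_integral M f = ereal (integral\<^sup>L M f)"
    unfolding ext real_lebesgue_integral_def[OF int] a_def[symmetric] b_def[symmetric]
    using pos \<open>b \<noteq> \<infinity>\<close> unfolding a_def[symmetric]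
    by (cases a; cases b) (auto simp: enn2real_ennreal)
  then show "integrable M f \<and> eexp (ext_integral M f) = exp (integral\<^sup>L M f)"
    using int unfolding eexp_def by simp
qed



lemma cmat_mult: "cmat (X ** Y) = cmat X ** cmat (Y :: real^'n^'n)"
  by (simp add: Finite_Cartesian_Product.vec_eq_iff cmat_def matrix_matrix_mult_def)

lemma cmat_one: "cmat (mat 1 :: real^'n^'n) = mat 1"
  by (simp add: Finite_Cartesian_Product.vec_eq_iff cmat_def Finite_Cartesian_Product.mat_def)

lemma mv_smult: "X *v (c *s x) = c *s (X *v (x :: complex^'n))"
  by (simp add: Finite_Cartesian_Product.vec_eq_iff matrix_vector_mult_def sum_distrib_left mult_ac)

lemma mpow_eig:
  assumes "cmat B *v v = z *s v"
  shows "cmat (mpow B n) *v v = z ^ n *s v"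
proof (induction n)
  case 0
  then show ?case by (simp add: cmat_one)
next
  case (Suc n)
  have "cmat (mpow B (Suc n)) *v v = cmat B *v (cmat (mpow B n) *v v)"
    by (simp add: cmat_mult matrix_vector_mul_assoc)
  also have "\<dots> = z ^ Suc n *s v" using Suc assms by (simp add: mv_smult)
  finally show ?case .
qed

lemma eig_growth:
  fixes B :: "real^'n^'n"
  assumes ev: "z \<in> cspectrum B" and nn: "\<And>i j. mpow B n $ i $ j \<ge> 0"
  shows "\<exists>i j. mpow B n $ i $ j \<ge> cmod z ^ n / CARD('n)"
proof (rule ccontr)
  assume neg: "\<not> ?thesis"
  obtain v where v0: "v \<noteq> 0" and evv: "cmat B *v v = z *s v" using ev unfolding cspectrum_def by auto
  define P where "P = mpow B n"
  define m where "m = Max (range (\<lambda>i. cmod (v $ i)))"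
  obtain i0 where i0: "cmod (v $ i0) = m"
  proof -
    have "m \<in> range (\<lambda>i. cmod (v $ i))" unfolding m_def by (rule Max_in) auto
    then show ?thesis using that by auto
  qed
  have mge: "cmod (v $ i) \<le> m" for i unfolding m_def by (rule Max_ge) auto
  obtain x where "v $ x \<noteq> 0" using v0 by (metis Finite_Cartesian_Product.vec_eq_iff Finite_Cartesian_Product.zero_index)
  then have mpos: "m > 0" using mge[of x] by (meson zero_less_norm_iff less_le_trans)
  have lt: "P $ i0 $ j < cmod z ^ n / CARD('n)" for j using neg unfolding P_def by (meson not_le)
  have "cmod z ^ n * m = cmod ((cmat P *v v) $ i0)"
    using mpow_eig[OF evv, of n] i0 unfolding P_def by (simp add: norm_mult norm_power)
  also have "\<dots> = cmod (\<Sum>j\<in>UNIV. complex_of_real (P $ i0 $ j) * v $ j)"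
    by (simp add: matrix_vector_mult_def cmat_def)
  also have "\<dots> \<le> (\<Sum>j\<in>UNIV. cmod (complex_of_real (P $ i0 $ j) * v $ j))" by (rule norm_sum)
  also have "\<dots> \<le> (\<Sum>j\<in>UNIV. P $ i0 $ j * m)"
    by (rule sum_mono) (use nn mge in \<open>auto simp: P_def norm_mult intro!: mult_left_mono\<close>)
  also have "\<dots> < (\<Sum>j\<in>(UNIV::'n set). cmod z ^ n / CARD('n) * m)"
  proof (rule sum_strict_mono)
    fix j :: 'n
    show "P $ i0 $ j * m < cmod z ^ n / CARD('n) * m" using lt[of j] mpos by (rule mult_strict_right_mono)
  qed auto
  also have "\<dots> = cmod z ^ n * m" by simp
  finally show False by simp
qed

locale lsetup =
  fixes M :: "'a measure" and \<theta> :: "'a \<Rightarrow> 'a"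
    and A :: "real^'n^'n" and D :: "'a \<Rightarrow> real^'n^'n"
  assumes P: "prob_space M"
    and aut: "automorphism M \<theta>"
    and Anonneg: "\<forall>i j. A $ i $ j \<ge> 0"
    and Dm: "D \<in> borel_measurable M"
    and A1: "\<forall>w \<in> space M. (\<forall>i j. i \<noteq> j \<longrightarrow> D w $ i $ j = 0) \<and> (\<forall>i. D w $ i $ i > 0)"
    and A2: "integrable M (\<lambda>w. max 0 (ln (Max (range (\<lambda>i. D w $ i $ i)))))"
begin

definition dbar :: "'n \<Rightarrow> real" where
  "dbar i = eexp (ext_integral M (\<lambda>w. ln (D w $ i $ i)))"

definition B :: "real^'n^'n" where
  "B = A ** (\<chi> i j. if i = j then dbar i else 0)"

abbreviation C :: "nat \<Rightarrow> 'a \<Rightarrow> real^'n^'n" where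
  "C n w \<equiv> cocycle \<theta> (\<lambda>u. A ** D u) n w"

definition g :: "'a \<Rightarrow> real" where
  "g w = max 0 (ln (Max (range (\<lambda>i. D w $ i $ i))))"

lemma g_int: "integrable M g" using A2 unfolding g_def by simp

lemma g_nonneg: "g w \<ge> 0" unfolding g_def by simp

lemma dm: "(\<lambda>w. D w $ i $ j) \<in> borel_measurable M"
proof -
  have "(\<lambda>x::real^'n^'n. x $ i $ j) \<in> borel_measurable borel"
    by (intro borel_measurable_continuous_onI continuous_intros)
  from measurable_compose[OF Dm this] show ?thesis by simp
qed

lemma ln_d_le_g: "w \<in> space M \<Longrightarrow> ln (D w $ k $ k) \<le> g w"
proof -
  assume w: "w \<in> space M"
  have le: "D w $ k $ k \<le> Max (range (\<lambda>i. D w $ i $ i))" by (rule Max_ge) auto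
  have pos: "D w $ k $ k > 0" using A1 w by auto
  have pm: "0 < Max (range (\<lambda>i. D w $ i $ i))" using le pos by linarith
  have "ln (D w $ k $ k) \<le> ln (Max (range (\<lambda>i. D w $ i $ i)))"
    using ln_le_cancel_iff[OF pos pm] le by simp
  then show ?thesis unfolding g_def by simp
qed

lemma dbar_nonneg: "dbar k \<ge> 0"
  unfolding dbar_def by (simp add: eexp_def)

lemma dbar_pos:
  assumes "dbar k > 0"
  shows "integrable M (\<lambda>w. ln (D w $ k $ k)) \<and> dbar k = exp (\<integral>w. ln (D w $ k $ k) \<partial>M)"
proof -
  have fm: "(\<lambda>w. ln (D w $ k $ k)) \<in> borel_measurable M" using dm by measurable
  have "(\<integral>\<^sup>+ x. ennreal (ln (D x $ k $ k)) \<partial>M) \<le> (\<integral>\<^sup>+ x. ennreal (g x) \<partial>M)"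
    by (intro nn_integral_mono ennreal_leI ln_d_le_g)
  also have "\<dots> < \<infinity>" using g_int unfolding real_integrable_def by (simp add: top.not_eq_extremum)
  finally have "(\<integral>\<^sup>+ x. ennreal (ln (D x $ k $ k)) \<partial>M) \<noteq> \<infinity>" by simp
  from eexp_ext_integral(2)[OF fm this] assms show ?thesis unfolding dbar_def by simp
qed

lemma S_entry: "w \<in> space M \<Longrightarrow> (A ** D w) $ i $ k = A $ i $ k * D w $ k $ k"
proof -
  assume w: "w \<in> space M"
  have "(A ** D w) $ i $ k = (\<Sum>l\<in>UNIV. A $ i $ l * D w $ l $ k)"
    by (simp add: matrix_matrix_mult_def)
  also have "\<dots> = (\<Sum>l\<in>UNIV. if l = k then A $ i $ k * D w $ k $ k else 0)"
    by (rule sum.cong) (use A1 w in auto)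
  finally show ?thesis by simp
qed

lemma B_entry: "B $ i $ k = A $ i $ k * dbar k"
proof -
  have "B $ i $ k = (\<Sum>l\<in>UNIV. A $ i $ l * (if l = k then dbar l else 0))"
    by (simp add: B_def matrix_matrix_mult_def)
  also have "\<dots> = (\<Sum>l\<in>UNIV. if l = k then A $ i $ k * dbar k else 0)"
    by (rule sum.cong) auto
  finally show ?thesis by simp
qed

lemma C_Suc: "w \<in> space M \<Longrightarrow>
   C (Suc n) w $ i $ j = (\<Sum>k\<in>UNIV. A $ i $ k * D ((\<theta> ^^ n) w) $ k $ k * C n w $ k $ j)"
  using S_entry[OF funpow_space[OF aut]] by (simp add: matrix_matrix_mult_def)

lemma mpow_Suc_entry: "mpow B (Suc n) $ i $ j = (\<Sum>k\<in>UNIV. A $ i $ k * dbar k * mpow B n $ k $ j)"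
  by (simp add: matrix_matrix_mult_def B_entry)

lemma C_nonneg: "w \<in> space M \<Longrightarrow> C n w $ i $ j \<ge> 0"
proof (induction n arbitrary: i j)
  case 0
  then show ?case by (simp add: Finite_Cartesian_Product.mat_def)
next
  case (Suc n)
  have "\<forall>k. 0 \<le> D ((\<theta> ^^ n) w) $ k $ k" using A1 funpow_space[OF aut Suc.prems] less_imp_le by blast
  then show ?case using Anonneg Suc.IH[OF Suc.prems]
    by (subst C_Suc[OF Suc.prems]) (auto intro!: sum_nonneg mult_nonneg_nonneg)
qed

lemma mpow_nonneg: "mpow B n $ i $ j \<ge> 0"
proof (induction n arbitrary: i j)
  case 0
  then show ?case by (simp add: Finite_Cartesian_Product.mat_def)
next
  case (Suc n)
  then show ?case using Anonneg dbar_nonneg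
    by (subst mpow_Suc_entry) (auto intro!: sum_nonneg mult_nonneg_nonneg)
qed


sublocale prob_space M by (rule P)


lemma lower:
  "mpow B n $ i $ j > 0 \<Longrightarrow> \<exists>h. integrable M h \<and> integral\<^sup>L M h = ln (mpow B n $ i $ j) \<and>
      (\<forall>w\<in>space M. 0 < C n w $ i $ j \<and> h w \<le> ln (C n w $ i $ j))"
proof (induction n arbitrary: i j)
  case 0
  then have "i = j" by (auto simp: Finite_Cartesian_Product.mat_def split: if_splits)
  then show ?case
    by (intro exI[of _ "\<lambda>_. 0"]) (auto simp: Finite_Cartesian_Product.mat_def)
next
  case (Suc n)
  define W where "W = mpow B (Suc n) $ i $ j"
  define c where "c k = A $ i $ k * dbar k * mpow B n $ k $ j" for k
  have c_nn: "c k \<ge> 0" for k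
    unfolding c_def using Anonneg dbar_nonneg mpow_nonneg by (auto intro!: mult_nonneg_nonneg)
  define K where "K = {k. c k > 0}"
  have fK: "finite K" by simp
  have WK: "W = sum c K"
  proof -
    have "W = sum c UNIV" unfolding W_def c_def by (rule mpow_Suc_entry)
    also have "\<dots> = sum c K"
      by (rule sum.mono_neutral_right) (use c_nn in \<open>auto simp: K_def less_le\<close>)
    finally show ?thesis .
  qed
  have Wpos: "W > 0" using Suc.prems W_def by simp
  have Kne: "K \<noteq> {}" using WK Wpos by auto
  define q where "q k = c k / W" for k
  have kprops: "A $ i $ k > 0 \<and> dbar k > 0 \<and> mpow B n $ k $ j > 0 \<and> q k > 0" if "k \<in> K" for k
  proof -
    have ck: "c k > 0" using that K_def by simp
    have "A $ i $ k \<noteq> 0" "dbar k \<noteq> 0" "mpow B n $ k $ j \<noteq> 0" using ck unfolding c_def by auto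
    then show ?thesis using Anonneg dbar_nonneg[of k] mpow_nonneg[of n k j] ck Wpos
      by (auto simp: q_def less_le)
  qed
  have "\<forall>k. \<exists>h. k \<in> K \<longrightarrow> (integrable M h \<and> integral\<^sup>L M h = ln (mpow B n $ k $ j) \<and>
      (\<forall>w\<in>space M. 0 < C n w $ k $ j \<and> h w \<le> ln (C n w $ k $ j)))"
    using Suc.IH kprops by blast
  then obtain H where H: "\<And>k. k \<in> K \<Longrightarrow> integrable M (H k) \<and> integral\<^sup>L M (H k) = ln (mpow B n $ k $ j) \<and>
      (\<forall>w\<in>space M. 0 < C n w $ k $ j \<and> H k w \<le> ln (C n w $ k $ j))"
    by metis
  have dint: "integrable M (\<lambda>w. ln (D w $ k $ k)) \<and> dbar k = exp (\<integral>w. ln (D w $ k $ k) \<partial>M)"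
    if "k \<in> K" for k using dbar_pos kprops[OF that] by blast
  have qsum: "sum q K = 1" unfolding q_def using WK Wpos by (simp add: sum_divide_distrib[symmetric])
  define h where "h w = (\<Sum>k\<in>K. q k * (ln (A $ i $ k) + ln (D ((\<theta> ^^ n) w) $ k $ k) + H k w - ln (q k)))" for w
  have intk: "integrable M (\<lambda>w. ln (A $ i $ k) + ln (D ((\<theta> ^^ n) w) $ k $ k) + H k w - ln (q k))"
    if "k \<in> K" for k
    using dint[OF that] H[OF that] funpow_integral(1)[OF aut, of "\<lambda>w. ln (D w $ k $ k)"]
    by auto
  show ?case
  proof (intro exI[of _ h] conjI ballI)
    show "integrable M h" unfolding h_def using intk by (intro Bochner_Integration.integrable_sum integrable_mult_right) auto
    have "integral\<^sup>L M h = (\<Sum>k\<in>K. q k * (ln (A $ i $ k) + ln (dbar k) + ln (mpow B n $ k $ j) - ln (q k)))"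
      unfolding h_def
    proof (subst Bochner_Integration.integral_sum, use intk in simp, rule sum.cong[OF refl])
      fix k assume k: "k \<in> K"
      have "(\<integral>w. q k * (ln (A $ i $ k) + ln (D ((\<theta> ^^ n) w) $ k $ k) + H k w - ln (q k)) \<partial>M)
          = q k * (ln (A $ i $ k) + (\<integral>w. ln (D ((\<theta> ^^ n) w) $ k $ k) \<partial>M) + integral\<^sup>L M (H k) - ln (q k))"
        using dint[OF k] H[OF k] funpow_integral(1)[OF aut, of "\<lambda>w. ln (D w $ k $ k)"]
        by (simp add: integral_diff integral_add prob_space)
      also have "\<dots> = q k * (ln (A $ i $ k) + ln (dbar k) + ln (mpow B n $ k $ j) - ln (q k))"
        using dint[OF k] H[OF k] funpow_integral(2)[OF aut, of "\<lambda>w. ln (D w $ k $ k)"] by simp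
      finally show "(\<integral>w. q k * (ln (A $ i $ k) + ln (D ((\<theta> ^^ n) w) $ k $ k) + H k w - ln (q k)) \<partial>M)
          = q k * (ln (A $ i $ k) + ln (dbar k) + ln (mpow B n $ k $ j) - ln (q k))" .
    qed
    also have "\<dots> = (\<Sum>k\<in>K. q k * ln W)"
    proof (rule sum.cong[OF refl])
      fix k assume k: "k \<in> K"
      have "ln (A $ i $ k) + ln (dbar k) + ln (mpow B n $ k $ j) - ln (q k) = ln (c k / q k)"
        using kprops[OF k] by (simp add: c_def ln_mult ln_div)
      also have "c k / q k = W" using kprops[OF k] Wpos unfolding q_def by (auto simp: field_simps)
      finally show "q k * (ln (A $ i $ k) + ln (dbar k) + ln (mpow B n $ k $ j) - ln (q k)) = q k * ln W" by simp
    qed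
    also have "\<dots> = ln W" using qsum by (simp add: sum_distrib_right[symmetric])
    finally show "integral\<^sup>L M h = ln (mpow B (Suc n) $ i $ j)" unfolding W_def .
  next
    fix w assume w: "w \<in> space M"
    define u where "u = (\<theta> ^^ n) w"
    have u: "u \<in> space M" unfolding u_def using funpow_space[OF aut w] .
    define y where "y k = A $ i $ k * D u $ k $ k * C n w $ k $ j / q k" for k
    have ypos: "y k > 0" if "k \<in> K" for k
      using kprops[OF that] H[OF that] w A1 u unfolding y_def by auto
    have "(\<Sum>k\<in>K. q k * y k) = (\<Sum>k\<in>K. A $ i $ k * D u $ k $ k * C n w $ k $ j)"
    proof (rule sum.cong[OF refl])
      fix k assume "k \<in> K"
      then have "q k > 0" using kprops by blast
      then show "q k * y k = A $ i $ k * D u $ k $ k * C n w $ k $ j" by (simp add: y_def)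
    qed
    also have "\<dots> \<le> (\<Sum>k\<in>UNIV. A $ i $ k * D u $ k $ k * C n w $ k $ j)"
    proof (rule sum_mono2)
      have Du: "\<forall>k. 0 \<le> D u $ k $ k" using A1 u less_imp_le by blast
      show "\<And>b. b \<in> UNIV - K \<Longrightarrow> 0 \<le> A $ i $ b * D u $ b $ b * C n w $ b $ j"
        using Anonneg Du C_nonneg[OF w] by (auto intro!: mult_nonneg_nonneg)
    qed auto
    also have "\<dots> = C (Suc n) w $ i $ j" using C_Suc[OF w] unfolding u_def by simp
    finally have le1: "(\<Sum>k\<in>K. q k * y k) \<le> C (Suc n) w $ i $ j" .
    have pos1: "(\<Sum>k\<in>K. q k * y k) > 0"
      using ypos kprops Kne by (intro sum_pos fK) auto
    show "0 < C (Suc n) w $ i $ j" using le1 pos1 by linarith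
    have "h w \<le> (\<Sum>k\<in>K. q k * ln (y k))"
      unfolding h_def u_def[symmetric]
    proof (rule sum_mono)
      fix k assume k: "k \<in> K"
      have "ln (y k) = ln (A $ i $ k) + ln (D u $ k $ k) + ln (C n w $ k $ j) - ln (q k)"
      proof -
        have p1: "D u $ k $ k > 0" using A1 u by auto
        have p2: "C n w $ k $ j > 0" using H[OF k] w by auto
        show ?thesis using kprops[OF k] p1 p2 unfolding y_def by (simp add: ln_mult ln_div)
      qed
      moreover have "H k w \<le> ln (C n w $ k $ j)" using H[OF k] w by auto
      ultimately show "q k * (ln (A $ i $ k) + ln (D u $ k $ k) + H k w - ln (q k)) \<le> q k * ln (y k)"
        using kprops[OF k] by (intro mult_left_mono) auto
    qed
    also have "\<dots> \<le> ln (\<Sum>k\<in>K. q k * y k)"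
      by (rule ln_sum_ge[OF fK Kne qsum]) (use kprops ypos in \<open>auto intro: less_imp_le\<close>)
    also have "\<dots> \<le> ln (C (Suc n) w $ i $ j)" using le1 pos1 by simp
    finally show "h w \<le> ln (C (Suc n) w $ i $ j)" .
  qed
qed


definition al :: real where "al = (\<Sum>i\<in>UNIV. \<Sum>k\<in>UNIV. A $ i $ k) + 1"

lemma row_le: "(\<Sum>k\<in>UNIV. A $ i $ k) \<le> al"
proof -
  have "(\<Sum>k\<in>UNIV. A $ i $ k) \<le> (\<Sum>i\<in>UNIV. \<Sum>k\<in>UNIV. A $ i $ k)"
    by (rule member_le_sum) (use Anonneg in \<open>auto intro: sum_nonneg\<close>)
  then show ?thesis unfolding al_def by simp
qed

lemma al_ge1: "al \<ge> 1"
  unfolding al_def using Anonneg by (simp add: sum_nonneg)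

definition mx :: "'a \<Rightarrow> real" where "mx w = Max (range (\<lambda>i. D w $ i $ i))"

lemma d_le_mx: "D w $ k $ k \<le> mx w" unfolding mx_def by (rule Max_ge) auto

lemma upper: "w \<in> space M \<Longrightarrow> C n w $ i $ j \<le> al ^ n * (\<Prod>k<n. max 1 (mx ((\<theta> ^^ k) w)))"
proof (induction n arbitrary: i j)
  case 0
  then show ?case by (simp add: Finite_Cartesian_Product.mat_def)
next
  case (Suc n)
  define u where "u = (\<theta> ^^ n) w"
  have u: "u \<in> space M" unfolding u_def using funpow_space[OF aut Suc.prems] .
  define bn where "bn = al ^ n * (\<Prod>k<n. max 1 (mx ((\<theta> ^^ k) w)))"
  have "C (Suc n) w $ i $ j = (\<Sum>k\<in>UNIV. A $ i $ k * D u $ k $ k * C n w $ k $ j)"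
    using C_Suc[OF Suc.prems] unfolding u_def by simp
  also have "\<dots> \<le> (\<Sum>k\<in>UNIV. A $ i $ k * (max 1 (mx u) * bn))"
  proof (rule sum_mono)
    fix k
    have "D u $ k $ k * C n w $ k $ j \<le> max 1 (mx u) * bn"
      using d_le_mx[of u k] Suc.IH[OF Suc.prems, of k j] C_nonneg[OF Suc.prems, of n k j] A1 u
      unfolding bn_def by (intro mult_mono) auto
    then show "A $ i $ k * D u $ k $ k * C n w $ k $ j \<le> A $ i $ k * (max 1 (mx u) * bn)"
      using Anonneg by (simp add: mult.assoc mult_left_mono)
  qed
  also have "\<dots> = (\<Sum>k\<in>UNIV. A $ i $ k) * (max 1 (mx u) * bn)"
    by (simp add: sum_distrib_right)
  also have "\<dots> \<le> al * (max 1 (mx u) * bn)"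
  proof (rule mult_right_mono[OF row_le])
    have "bn \<ge> 0" unfolding bn_def using al_ge1 by (intro mult_nonneg_nonneg prod_nonneg) auto
    then show "0 \<le> max 1 (mx u) * bn" by simp
  qed
  also have "\<dots> = al ^ Suc n * (\<Prod>k<Suc n. max 1 (mx ((\<theta> ^^ k) w)))"
    unfolding bn_def u_def by (simp add: algebra_simps)
  finally show ?case .
qed

lemma ln_max1: "w \<in> space M \<Longrightarrow> ln (max 1 (mx w)) = g w"
proof -
  assume w: "w \<in> space M"
  have "mx w > 0" using d_le_mx[of w] A1 w by (meson less_le_trans UNIV_I)
  then show ?thesis unfolding g_def mx_def[symmetric]
    by (cases "mx w \<ge> 1") (auto simp: max_def)
qed

lemma ln_upper:
  assumes w: "w \<in> space M" and pos: "C n w $ i $ j > 0"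
  shows "ln (C n w $ i $ j) \<le> n * ln al + (\<Sum>k<n. g ((\<theta> ^^ k) w))"
proof -
  have "ln (C n w $ i $ j) \<le> ln (al ^ n * (\<Prod>k<n. max 1 (mx ((\<theta> ^^ k) w))))"
    using upper[OF w, of n i j] pos by (subst ln_le_cancel_iff) (auto intro!: mult_pos_pos prod_pos simp: al_ge1)
  also have "\<dots> = n * ln al + (\<Sum>k<n. ln (max 1 (mx ((\<theta> ^^ k) w))))"
  proof -
    have nz: "\<And>k. max 1 (mx ((\<theta> ^^ k) w)) \<noteq> 0" by (metis max.cobounded1 not_one_le_zero)
    have pp: "(\<Prod>k<n. max 1 (mx ((\<theta> ^^ k) w))) > 0" by (intro prod_pos) (auto simp: max_def)
    have "ln (al ^ n * (\<Prod>k<n. max 1 (mx ((\<theta> ^^ k) w)))) = ln (al ^ n) + ln (\<Prod>k<n. max 1 (mx ((\<theta> ^^ k) w)))"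
      using al_ge1 pp by (intro ln_mult_pos) auto
    then show ?thesis using al_ge1 nz by (simp add: ln_prod ln_realpow)
  qed
  also have "\<dots> = n * ln al + (\<Sum>k<n. g ((\<theta> ^^ k) w))"
    using ln_max1[OF funpow_space[OF aut w]] by simp
  finally show ?thesis .
qed

lemma entry_le_opnorm: "X $ i $ j \<le> opnorm (X :: real^'n^'n)"
proof -
  have "X $ i $ j = (X *v axis j 1) $ i"
    by (simp add: matrix_vector_mult_def axis_def if_distrib cong: if_cong)
  also have "\<dots> \<le> norm (X *v axis j 1)" using component_le_norm_cart by (rule order_trans[OF abs_ge_self])
  also have "\<dots> \<le> onorm ((*v) X) * norm (axis j (1::real))" by (rule onorm) simp
  also have "\<dots> = opnorm X" by (simp add: opnorm_def norm_axis_1)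
  finally show ?thesis .
qed


lemma g_meas[measurable]: "g \<in> borel_measurable M" using g_int by auto

definition phi :: "real \<Rightarrow> 'a \<Rightarrow> real" where
  "phi K w = (if g w > K then g w else 0)"

lemma phi_int: "integrable M (phi K)"
proof (rule Bochner_Integration.integrable_bound[OF g_int])
  show "phi K \<in> borel_measurable M" unfolding phi_def by measurable
  show "AE x in M. norm (phi K x) \<le> norm (g x)" using g_nonneg by (auto simp: phi_def)
qed

lemma phi_nonneg: "phi K w \<ge> 0" using g_nonneg by (simp add: phi_def)

lemma g_le_phi: "K \<ge> 0 \<Longrightarrow> g w \<le> K + phi K w" using g_nonneg by (simp add: phi_def)

lemma tau_small: assumes "e > 0" shows "\<exists>K::nat. integral\<^sup>L M (phi (real K)) < e"
proof -
  have "(\<lambda>k::nat. integral\<^sup>L M (phi (real k))) \<longlonglongrightarrow> integral\<^sup>L M (\<lambda>_. 0::real)"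
  proof (rule integral_dominated_convergence[OF _ _ g_int])
    show "(\<lambda>_. 0::real) \<in> borel_measurable M" by simp
    show "\<And>k. phi (real k) \<in> borel_measurable M" using phi_int by auto
    show "AE x in M. (\<lambda>k. phi (real k) x) \<longlonglongrightarrow> 0"
    proof (rule AE_I2)
      fix x
      obtain k0 :: nat where "g x < real k0" using reals_Archimedean2 by blast
      then have "\<forall>\<^sub>F k in sequentially. phi (real k) x = 0"
        unfolding eventually_sequentially phi_def
        by (intro exI[of _ k0]) (auto dest: order.strict_trans2)
      then show "(\<lambda>k. phi (real k) x) \<longlonglongrightarrow> 0" by (rule tendsto_eventually)
    qed
    show "\<And>k. AE x in M. norm (phi (real k) x) \<le> g x" using g_nonneg by (auto simp: phi_def)
  qed
  then have "(\<lambda>k::nat. integral\<^sup>L M (phi (real k))) \<longlonglongrightarrow> 0" by simp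
  from order_tendstoD(2)[OF this assms] show ?thesis
    by (meson eventually_sequentially order.refl)
qed

theorem final:
  assumes lyap: "AE w in M. (\<lambda>n. eln (opnorm (C n w)) / ereal (real n)) \<longlonglongrightarrow> lam"
  shows "eln (spectral_radius B) \<le> lam"
proof (rule ccontr)
  assume "\<not> ?thesis"
  then have lt: "lam < eln (spectral_radius B)" by simp
  define \<rho> where "\<rho> = spectral_radius B"
  have fin: "finite (cspectrum B)" and ne: "cspectrum B \<noteq> {}" using cspectrum_finite_nonempty by auto
  have "\<rho> \<in> cmod ` cspectrum B" unfolding \<rho>_def Defs.spectral_radius_def using fin ne by (intro Max_in) auto
  then obtain z where z: "z \<in> cspectrum B" and \<rho>z: "\<rho> = cmod z" by auto
  have "\<rho> \<noteq> 0" using lt unfolding \<rho>_def[symmetric] eln_def by auto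
  then have \<rho>pos: "\<rho> > 0" using \<rho>z by simp
  then have elnr: "eln \<rho> = ereal (ln \<rho>)" unfolding eln_def by simp
  obtain c where c1: "lam < ereal c" and c2: "c < ln \<rho>"
    using ereal_dense2[OF lt[unfolded \<rho>_def[symmetric] elnr]] by auto
  define \<delta> where "\<delta> = (ln \<rho> - c) / 4"
  have \<delta>pos: "\<delta> > 0" unfolding \<delta>_def using c2 by simp
  define N where "N = real CARD('n)"
  have Npos: "N > 0" unfolding N_def by simp
  have "\<forall>n. \<exists>i j. mpow B n $ i $ j \<ge> \<rho> ^ n / N"
    using eig_growth[OF z mpow_nonneg] \<rho>z unfolding N_def by auto
  then obtain I J where IJ: "\<And>n. mpow B n $ I n $ J n \<ge> \<rho> ^ n / N" by metis
  have IJpos: "mpow B n $ I n $ J n > 0" for n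
    using IJ[of n] \<rho>pos Npos by (meson divide_pos_pos less_le_trans zero_less_power)
  have "\<forall>n. \<exists>h. integrable M h \<and> integral\<^sup>L M h = ln (mpow B n $ I n $ J n) \<and>
      (\<forall>w\<in>space M. 0 < C n w $ I n $ J n \<and> h w \<le> ln (C n w $ I n $ J n))"
    using lower IJpos by blast
  then obtain H where H: "\<And>n. integrable M (H n) \<and> integral\<^sup>L M (H n) = ln (mpow B n $ I n $ J n) \<and>
      (\<forall>w\<in>space M. 0 < C n w $ I n $ J n \<and> H n w \<le> ln (C n w $ I n $ J n))" by metis
  have Hm[measurable]: "H n \<in> borel_measurable M" for n using H by auto
  have Hop: "H n w \<le> ln (opnorm (C n w))" "opnorm (C n w) > 0" if "w \<in> space M" for n w
  proof -
    have p: "C n w $ I n $ J n > 0" "H n w \<le> ln (C n w $ I n $ J n)" using H that by auto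
    have le: "C n w $ I n $ J n \<le> opnorm (C n w)" by (rule entry_le_opnorm)
    show "opnorm (C n w) > 0" using p le by linarith
    show "H n w \<le> ln (opnorm (C n w))" using p le by (meson ln_le_cancel_iff order_trans less_le_trans)
  qed
  have Hint: "integral\<^sup>L M (H n) \<ge> n * ln \<rho> - ln N" for n
  proof -
    have "n * ln \<rho> - ln N = ln (\<rho> ^ n / N)" using \<rho>pos Npos by (simp add: ln_div ln_realpow)
    also have "\<dots> \<le> ln (mpow B n $ I n $ J n)" using IJ[of n] IJpos[of n] \<rho>pos Npos by (subst ln_le_cancel_iff) auto
    finally show ?thesis using H by simp
  qed
  define E where "E n = {w \<in> space M. H n w > n * c}" for n
  have Em[measurable]: "E n \<in> sets M" for n unfolding E_def by measurable
  have PE: "(\<lambda>n. measure M (E n)) \<longlonglongrightarrow> 0"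
  proof -
    have "(\<lambda>n. integral\<^sup>L M (indicator (E n) :: 'a \<Rightarrow> real)) \<longlonglongrightarrow> integral\<^sup>L M (\<lambda>_. 0::real)"
    proof (rule integral_dominated_convergence[where w="\<lambda>_. 1"])
      show "(\<lambda>_. 0::real) \<in> borel_measurable M" by simp
      show "\<And>n. (indicator (E n) :: 'a \<Rightarrow> real) \<in> borel_measurable M" by measurable
      show "integrable M (\<lambda>_. 1::real)" by simp
      show "\<And>n. AE x in M. norm (indicator (E n) x :: real) \<le> 1" by (auto simp: indicator_def)
      show "AE x in M. (\<lambda>n. indicator (E n) x :: real) \<longlonglongrightarrow> 0"
        using lyap
      proof (eventually_elim)
        case (elim w)
        show ?case
        proof (cases "w \<in> space M")
          case False
          then show ?thesis by (simp add: E_def indicator_def)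
        next
          case True
          have ev1: "\<forall>\<^sub>F n in sequentially. eln (opnorm (C n w)) / ereal (real n) < ereal c"
            using order_tendstoD(2)[OF elim c1] .
          have ev2: "\<forall>\<^sub>F n in sequentially. n \<ge> 1" by (rule eventually_ge_at_top)
          have "\<forall>\<^sub>F n in sequentially. indicator (E n) w = (0::real)"
            using ev1 ev2
          proof eventually_elim
            case (elim n)
            have op: "opnorm (C n w) > 0" using Hop[OF True] by auto
            have "eln (opnorm (C n w)) / ereal (real n) = ereal (ln (opnorm (C n w)) / real n)"
              using op elim(2) by (simp add: eln_def)
            then have "ln (opnorm (C n w)) / real n < c" using elim(1) by simp
            then have "ln (opnorm (C n w)) < n * c" using elim(2) by (simp add: divide_less_eq mult.commute)
            then have "H n w < n * c" using Hop(1)[OF True, of n] by linarith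
            then show ?case by (simp add: E_def indicator_def)
          qed
          then show ?thesis by (rule tendsto_eventually)
        qed
      qed
    qed
    moreover have "integral\<^sup>L M (indicator (E n) :: 'a \<Rightarrow> real) = measure M (E n)" for n
      using sets.sets_into_space[OF Em[of n]] by (simp add: Int_absorb2)
    ultimately show ?thesis by simp
  qed
  obtain K0 :: nat where K0: "integral\<^sup>L M (phi (real K0)) < \<delta>" using tau_small[OF \<delta>pos] by blast
  define K where "K = real K0"
  have K0': "K \<ge> 0" unfolding K_def by simp
  define L where "L = ln al + \<bar>c\<bar> + K"
  have lnal: "ln al \<ge> 0" using al_ge1 by simp
  have Lnn: "L \<ge> 0" unfolding L_def using lnal K0' by simp
  have ev1: "\<forall>\<^sub>F n in sequentially. measure M (E n) * L < \<delta>"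
  proof -
    have "(\<lambda>n. measure M (E n) * L) \<longlonglongrightarrow> 0 * L" by (intro tendsto_mult PE tendsto_const)
    from order_tendstoD(2)[OF this[simplified] \<delta>pos] show ?thesis .
  qed
  have ev2: "\<forall>\<^sub>F n in sequentially. ln N / real n < \<delta>"
    using order_tendstoD(2)[OF lim_const_over_n[of "ln N"] \<delta>pos] by simp
  have ev3: "\<forall>\<^sub>F n in sequentially. n \<ge> 1" by (rule eventually_ge_at_top)
  obtain n where n1: "measure M (E n) * L < \<delta>" and n2: "ln N / real n < \<delta>" and n3: "n \<ge> 1"
    using eventually_happens'[OF sequentially_bot, OF eventually_conj[OF ev1 eventually_conj[OF ev2 ev3]]] by blast
  define R where "R w = n * c + (n * L) * indicator (E n) w + (\<Sum>k<n. phi K ((\<theta> ^^ k) w))" for w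
  have Rint: "integrable M R" unfolding R_def
    using funpow_integral(1)[OF aut phi_int]
    by (intro Bochner_Integration.integrable_add integrable_mult_right Bochner_Integration.integrable_sum) (auto simp: integrable_indicator_iff less_top[symmetric])
  have HR: "H n w \<le> R w" if w: "w \<in> space M" for w
  proof (cases "w \<in> E n")
    case True
    have p: "C n w $ I n $ J n > 0" "H n w \<le> ln (C n w $ I n $ J n)" using H w by auto
    have "H n w \<le> n * ln al + (\<Sum>k<n. g ((\<theta> ^^ k) w))" using ln_upper[OF w p(1)] p(2) by linarith
    also have "\<dots> \<le> n * ln al + (\<Sum>k<n. K + phi K ((\<theta> ^^ k) w))"
      by (intro add_left_mono sum_mono g_le_phi K0')
    also have "\<dots> = n * ln al + n * K + (\<Sum>k<n. phi K ((\<theta> ^^ k) w))" by (simp add: sum.distrib)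
    also have "\<dots> \<le> R w"
    proof -
      have "n * c + n * \<bar>c\<bar> \<ge> 0" by (simp add: add_nonneg_eq_0_iff abs_if mult_nonneg_nonneg)
      then show ?thesis using True unfolding R_def L_def by (simp add: algebra_simps)
    qed
    finally show ?thesis .
  next
    case False
    then have "H n w \<le> n * c" using w unfolding E_def by auto
    moreover have "(\<Sum>k<n. phi K ((\<theta> ^^ k) w)) \<ge> 0" by (intro sum_nonneg phi_nonneg)
    ultimately show ?thesis using False Lnn unfolding R_def by simp
  qed
  have intR: "integral\<^sup>L M R = n * c + n * L * measure M (E n) + n * integral\<^sup>L M (phi K)"
  proof -
    have "integral\<^sup>L M R = n * c + n * L * integral\<^sup>L M (indicator (E n) :: 'a \<Rightarrow> real)
        + (\<Sum>k<n. integral\<^sup>L M (\<lambda>w. phi K ((\<theta> ^^ k) w)))"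
      unfolding R_def using funpow_integral(1)[OF aut phi_int]
      by (simp add: Bochner_Integration.integral_sum Bochner_Integration.integral_add Bochner_Integration.integrable_sum integrable_indicator_iff less_top[symmetric] prob_space)
    also have "\<dots> = n * c + n * L * measure M (E n) + n * integral\<^sup>L M (phi K)"
      using funpow_integral(2)[OF aut phi_int] sets.sets_into_space[OF Em[of n]] by (simp add: Int_absorb2)
    finally show ?thesis .
  qed
  have "n * ln \<rho> - ln N \<le> integral\<^sup>L M R"
    using Hint[of n] integral_mono[OF conjunct1[OF H[of n]] Rint HR] by linarith
  also have "\<dots> = n * c + n * (L * measure M (E n)) + n * integral\<^sup>L M (phi K)" by (simp add: intR)
  also have "\<dots> < n * c + n * \<delta> + n * \<delta>"
  proof -
    have "n * (L * measure M (E n)) < n * \<delta>" using n1 n3 by (simp add: mult.commute)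
    moreover have "n * integral\<^sup>L M (phi K) < n * \<delta>" using K0 n3 unfolding K_def by simp
    ultimately show ?thesis by linarith
  qed
  finally have "n * ln \<rho> - ln N < n * c + 2 * n * \<delta>" by (simp add: algebra_simps)
  moreover have "ln N < n * \<delta>" using n2 n3 by (simp add: divide_less_eq mult.commute)
  ultimately have "n * ln \<rho> < n * (c + 3 * \<delta>)" by (simp add: algebra_simps)
  then have "ln \<rho> < c + 3 * \<delta>" using n3 by simp
  then show False using c2 unfolding \<delta>_def by (simp add: field_simps)
qed

end

theorem mainTheorem1:
  fixes M :: "'a measure" and \<theta> :: "'a \<Rightarrow> 'a"
    and A :: "real^'n^'n" and D :: "'a \<Rightarrow> real^'n^'n" and lam :: ereal
  assumes "prob_space M"
    and "ergodic_automorphism M \<theta>"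
    and "\<forall>i j. A $ i $ j \<ge> 0"
    and "D \<in> borel_measurable M"
    and A1: "\<forall>w \<in> space M. (\<forall>i j. i \<noteq> j \<longrightarrow> D w $ i $ j = 0) \<and> (\<forall>i. D w $ i $ i > 0)"
    and A2: "integrable M (\<lambda>w. max 0 (ln (Max (range (\<lambda>i. D w $ i $ i)))))"
    and lyap: "AE w in M. (\<lambda>n. eln (opnorm (cocycle \<theta> (\<lambda>u. A ** D u) n w)) / ereal (real n))
                 \<longlonglongrightarrow> lam"
  shows "eln (spectral_radius (A ** (\<chi> i j. if i = j then eexp (ext_integral M (\<lambda>w. ln (D w $ i $ i))) else 0)))
           \<le> lam"
  proof -
  have aut: "automorphism M \<theta>" using assms(2) unfolding ergodic_automorphism_def by simp
  interpret lsetup M \<theta> A D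
    using assms(1) aut assms(3) assms(4) A1 A2 by (rule lsetup.intro)
  show ?thesis using final[OF lyap] unfolding B_def dbar_def .
qed

end
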